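(* For every $0<c<1$ there exist a constant $K>0$ and infinitely many positive integers $k$ such that, for each such $k$, there is an instance with committee size $k$ and an exhaustive affordable committee $W$ satisfying EJR whose utilitarian ratio is at most $K/k^{1-c}$.
   Context: An instance $(A,C,k)$ consists of a finite nonempty candidate set $C$, voters $N=\{1,\dots,n\}$, approval sets $A_i\subseteq C$, and a committee size $1\le k\le|C|$. A committee is $W\subseteq C$ with $|W|\le k$; it is exhaustive if $|W|=k$. $\mathrm{sw}(W)=\sum_i|A_i\cap W|$; the utilitarian ratio is $\mathrm{sw}(W)/\max\{\mathrm{sw}(W'):|W'|=k\}$. $W$ is affordable if there are $p_i:C\to\mathbb{R}_{\ge0}$ with $p_i(c)=0$ for $c\notin A_i$, $\sum_c p_i(c)\le k/n$, $\sum_i p_i(c)=1$ for $c\in W$, $\sum_i p_i(c)=0$ for $c\notin W$. $W$ satisfies EJR if for every $\ell\in\{1,\dots,k\}$ and every group $N'\subseteq N$ with $|N'|\ge\ell n/k$ and $|\bigcap_{i\in N'}A_i|\ge\ell$, some $i\in N'$ has $|A_i\cap W|\ge\ell$. *)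

theory Defs
  imports Complex_Main
begin

(* Candidates are natural numbers; voters are N = {1..n};
   A i is the approval set of voter i. *)

definition is_instance :: "nat set \<Rightarrow> nat \<Rightarrow> (nat \<Rightarrow> nat set) \<Rightarrow> nat \<Rightarrow> bool" where
  "is_instance C n A k \<longleftrightarrow> finite C \<and> C \<noteq> {} \<and> n \<ge> 1 \<and>
     (\<forall>i\<in>{1..n}. A i \<subseteq> C) \<and> 1 \<le> k \<and> k \<le> card C"

definition is_committee :: "nat set \<Rightarrow> nat \<Rightarrow> nat set \<Rightarrow> bool" where
  "is_committee C k W \<longleftrightarrow> W \<subseteq> C \<and> card W \<le> k"

definition exhaustive :: "nat \<Rightarrow> nat set \<Rightarrow> bool" where
  "exhaustive k W \<longleftrightarrow> card W = k"

definition sw :: "nat \<Rightarrow> (nat \<Rightarrow> nat set) \<Rightarrow> nat set \<Rightarrow> nat" where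
  "sw n A W = (\<Sum>i\<in>{1..n}. card (A i \<inter> W))"

definition opt_sw :: "nat set \<Rightarrow> nat \<Rightarrow> (nat \<Rightarrow> nat set) \<Rightarrow> nat \<Rightarrow> nat" where
  "opt_sw C n A k = Max {sw n A W' | W'. W' \<subseteq> C \<and> card W' = k}"

definition util_ratio :: "nat set \<Rightarrow> nat \<Rightarrow> (nat \<Rightarrow> nat set) \<Rightarrow> nat \<Rightarrow> nat set \<Rightarrow> real" where
  "util_ratio C n A k W = real (sw n A W) / real (opt_sw C n A k)"

definition affordable :: "nat set \<Rightarrow> nat \<Rightarrow> (nat \<Rightarrow> nat set) \<Rightarrow> nat \<Rightarrow> nat set \<Rightarrow> bool" where
  "affordable C n A k W \<longleftrightarrow> (\<exists>p :: nat \<Rightarrow> nat \<Rightarrow> real.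
     (\<forall>i\<in>{1..n}. \<forall>c\<in>C. p i c \<ge> 0) \<and>
     (\<forall>i\<in>{1..n}. \<forall>c\<in>C. c \<notin> A i \<longrightarrow> p i c = 0) \<and>
     (\<forall>i\<in>{1..n}. (\<Sum>c\<in>C. p i c) \<le> real k / real n) \<and>
     (\<forall>c\<in>W. (\<Sum>i\<in>{1..n}. p i c) = 1) \<and>
     (\<forall>c\<in>C - W. (\<Sum>i\<in>{1..n}. p i c) = 0))"

definition EJR :: "nat \<Rightarrow> (nat \<Rightarrow> nat set) \<Rightarrow> nat \<Rightarrow> nat set \<Rightarrow> bool" where
  "EJR n A k W \<longleftrightarrow> (\<forall>l\<in>{1..k}. \<forall>N'. N' \<subseteq> {1..n} \<longrightarrow>
     real (card N') \<ge> real l * real n / real k \<longrightarrow>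
     card (\<Inter>i\<in>N'. A i) \<ge> l \<longrightarrow>
     (\<exists>i\<in>N'. card (A i \<inter> W) \<ge> l))"

end

theory Submission imports Defs "HOL-Library.FuncSet" "HOL-Library.Infinite_Set" begin

lemma bij_card_filter:
  assumes "bij_betw g S V"
  shows "card {i\<in>S. P (g i)} = card {v\<in>V. P v}"
proof -
  have "g ` {i\<in>S. P (g i)} = {v\<in>V. P v}"
    using assms unfolding bij_betw_def by auto
  moreover have "inj_on g {i\<in>S. P (g i)}"
    using assms unfolding bij_betw_def by (auto intro: inj_on_subset)
  ultimately show ?thesis using card_image by fastforce
qed

definition gr :: "nat \<Rightarrow> nat \<Rightarrow> (nat \<Rightarrow> nat) \<Rightarrow> nat set" where
  "gr b s f = {x\<in>{0..<b*s}. f (x div b) = x mod b}"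

lemma gr_card:
  assumes "b > 0" "f \<in> {0..<s} \<rightarrow>\<^sub>E {0..<b}"
  shows "card (gr b s f) = s"
proof -
  have "gr b s f = (\<lambda>j. j*b + f j) ` {0..<s}"
  proof
    show "gr b s f \<subseteq> (\<lambda>j. j*b + f j) ` {0..<s}"
    proof
      fix x assume x: "x \<in> gr b s f"
      then have "x div b < s" "f (x div b) = x mod b" unfolding gr_def
        by (auto simp: less_mult_imp_div_less mult.commute)
      then show "x \<in> (\<lambda>j. j*b + f j) ` {0..<s}"
        by (intro image_eqI[of _ _ "x div b"]) auto
    qed
    show "(\<lambda>j. j*b + f j) ` {0..<s} \<subseteq> gr b s f"
    proof
      fix x assume "x \<in> (\<lambda>j. j*b + f j) ` {0..<s}"
      then obtain j where j: "j < s" "x = j*b + f j" by auto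
      have fj: "f j < b" using assms j by auto
      have "x < b*s"
      proof -
        have "x < j*b + b" using j fj by simp
        also have "\<dots> = (j+1)*b" by simp
        also have "\<dots> \<le> s*b" using j by (intro mult_right_mono) auto
        finally show ?thesis by (simp add: mult.commute)
      qed
      moreover have "x div b = j" "x mod b = f j" using j fj assms by auto
      ultimately show "x \<in> gr b s f" unfolding gr_def by auto
    qed
  qed
  moreover have "inj_on (\<lambda>j. j*b + f j) {0..<s}"
  proof
    fix i j assume ij: "i \<in> {0..<s}" "j \<in> {0..<s}" "i*b + f i = j*b + f j"
    have "f i < b" "f j < b" using assms ij by auto
    then have "(i*b + f i) div b = i" "(j*b + f j) div b = j" using assms by auto
    then show "i = j" using ij by metis
  qed
  ultimately show ?thesis by (simp add: card_image)
qed

lemma count_fun: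
  assumes "b > 0" "I \<subseteq> {0..<b*s}"
    and ne: "{f\<in>{0..<s} \<rightarrow>\<^sub>E {0..<b}. I \<subseteq> gr b s f} \<noteq> {}"
  shows "card I \<le> s \<and> card {f\<in>{0..<s} \<rightarrow>\<^sub>E {0..<b}. I \<subseteq> gr b s f} \<le> b ^ (s - card I)"
proof -
  let ?Q = "{f\<in>{0..<s} \<rightarrow>\<^sub>E {0..<b}. I \<subseteq> gr b s f}"
  obtain f0 where f0: "f0 \<in> ?Q" using ne by auto
  define J where "J = (\<lambda>x. x div b) ` I"
  have inj: "inj_on (\<lambda>x. x div b) I"
  proof
    fix x y assume xy: "x \<in> I" "y \<in> I" "x div b = y div b"
    have "f0 (x div b) = x mod b" "f0 (y div b) = y mod b" using f0 xy(1,2) unfolding gr_def by auto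
    then have "x mod b = y mod b" using xy(3) by simp
    then show "x = y" using xy by (metis div_mult_mod_eq)
  qed
  have finI: "finite I" using assms(2) finite_subset by blast
  have cJ: "card J = card I" unfolding J_def using inj by (simp add: card_image)
  have Js: "J \<subseteq> {0..<s}" unfolding J_def using assms(2)
    by (auto simp: less_mult_imp_div_less mult.commute)
  have "card J \<le> s" using card_mono[OF _ Js] by simp
  define r where "r = (\<lambda>f::nat\<Rightarrow>nat. restrict f ({0..<s} - J))"
  have injr: "inj_on r ?Q"
  proof
    fix f f' assume ff: "f \<in> ?Q" "f' \<in> ?Q" "r f = r f'"
    show "f = f'"
    proof
      fix j
      show "f j = f' j"
      proof (cases "j \<in> {0..<s}")
        case False
        have "f \<in> {0..<s} \<rightarrow>\<^sub>E {0..<b}" "f' \<in> {0..<s} \<rightarrow>\<^sub>E {0..<b}" using ff(1,2) by auto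
        then have "f j = undefined" "f' j = undefined" using False by (blast intro: PiE_arb)+
        then show ?thesis by simp
      next
        case True
        show ?thesis
        proof (cases "j \<in> J")
          case True
          then obtain x where x: "x \<in> I" "j = x div b" unfolding J_def by auto
          have "f (x div b) = x mod b" "f' (x div b) = x mod b" using ff(1,2) x(1) unfolding gr_def by auto
          then show ?thesis using x(2) by simp
        next
          case False
          have "r f j = r f' j" using ff(3) by simp
          then show ?thesis using False \<open>j \<in> {0..<s}\<close> unfolding r_def by simp
        qed
      qed
    qed
  qed
  have "r ` ?Q \<subseteq> ({0..<s} - J) \<rightarrow>\<^sub>E {0..<b}"
  proof
    fix y assume "y \<in> r ` ?Q"
    then obtain f where f: "f \<in> ?Q" "y = r f" by blast
    then have "f \<in> {0..<s} \<rightarrow>\<^sub>E {0..<b}" by blast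
    then show "y \<in> ({0..<s} - J) \<rightarrow>\<^sub>E {0..<b}" unfolding f(2) r_def by (auto simp: PiE_iff)
  qed
  then have "card (r ` ?Q) \<le> card (({0..<s} - J) \<rightarrow>\<^sub>E {0..<b})"
    by (intro card_mono finite_PiE) auto
  also have "\<dots> = b ^ card ({0..<s} - J)" by (simp add: card_funcsetE)
  also have "card ({0..<s} - J) = s - card J" using Js by (simp add: card_Diff_subset finite_subset)
  finally have "card ?Q \<le> b ^ (s - card I)" using injr cJ by (simp add: card_image)
  then show ?thesis using cJ \<open>card J \<le> s\<close> by simp
qed


lemma blk_iff:
  fixes a k u c :: nat
  assumes "a > 0"
  shows "(c \<in> {k+u*a..<k+u*a+a}) \<longleftrightarrow> (k \<le> c \<and> u = (c-k) div a)"
proof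
  assume h: "c \<in> {k+u*a..<k+u*a+a}"
  then have "a*u \<le> c-k" "c-k < a * Suc u" by (auto simp: algebra_simps)
  then show "k \<le> c \<and> u = (c-k) div a" using h div_nat_eqI by auto
next
  assume h: "k \<le> c \<and> u = (c-k) div a"
  have "(c-k) div a * a \<le> c-k" by (metis div_mult_mod_eq le_add1)
  then have "u*a \<le> c-k" using h by simp
  moreover have "c-k < u*a + a" using h assms
    by (metis add.commute div_mult_mod_eq mod_less_divisor nat_add_left_cancel_less)
  ultimately have "k+u*a \<le> c" "c < k+u*a+a" using h by arith+
  then show "c \<in> {k+u*a..<k+u*a+a}" by simp
qed

lemma construction:
  fixes a t :: nat
  assumes a1: "a \<ge> 1" and t1: "t \<ge> 1"
  shows "\<exists>C n A W. is_instance C n A ((a*t)^(a+1)) \<and> is_committee C ((a*t)^(a+1)) W \<and>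
      exhaustive ((a*t)^(a+1)) W \<and> affordable C n A ((a*t)^(a+1)) W \<and> EJR n A ((a*t)^(a+1)) W \<and>
      opt_sw C n A ((a*t)^(a+1)) > 0 \<and>
      util_ratio C n A ((a*t)^(a+1)) W \<le> real a / real ((a*t)^a)"
proof -
  define b where "b = a*t"
  define s where "s = b^a"
  define m where "m = t*s"
  define k where "k = a*m"
  have bpos: "b > 0" using a1 t1 unfolding b_def by simp
  have spos: "s > 0" using bpos unfolding s_def by simp
  have mpos: "m > 0" using spos t1 unfolding m_def by simp
  have kpos: "k > 0" using mpos a1 unfolding k_def by simp
  have kbs: "k = b*s" unfolding k_def m_def b_def by simp
  have kpow: "k = b^(a+1)" unfolding kbs s_def by simp
  define F where "F = ({0..<s} \<rightarrow>\<^sub>E {0..<b} :: (nat \<Rightarrow> nat) set)"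
  define V where "V = F \<times> {..<m}"
  have finF: "finite F" unfolding F_def by (intro finite_PiE) auto
  have finV: "finite V" unfolding V_def using finF by simp
  have cardF: "card F = b^s" unfolding F_def by (simp add: card_funcsetE)
  have cardV: "card V = b^s*m" unfolding V_def using cardF by (simp add: card_cartesian_product)
  define n where "n = card V"
  obtain g where g: "bij_betw g {1..n} V" using ex_bij_betw_nat_finite_1[OF finV] unfolding n_def by blast
  have npos: "n > 0" unfolding n_def cardV using bpos mpos by simp
  define blk where "blk = (\<lambda>u::nat. {k+u*a..<k+u*a+a})"
  define Av where "Av = (\<lambda>v::(nat\<Rightarrow>nat)\<times>nat. gr b s (fst v) \<union> blk (snd v))"
  define A where "A = (\<lambda>i. Av (g i))"
  define C where "C = {0..<2*k}"
  define W where "W = {k..<2*k}"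
  have gi: "fst (g i) \<in> F" "snd (g i) < m" if "i \<in> {1..n}" for i
  proof -
    have "g i \<in> V" using bij_betwE[OF g] that by blast
    then show "fst (g i) \<in> F" "snd (g i) < m" unfolding V_def by (auto simp: mem_Times_iff)
  qed
  have blkW: "blk u \<subseteq> W" if "u < m" for u
  proof -
    have "(u+1)*a \<le> m*a" using that by (intro mult_right_mono) auto
    then have "k+u*a+a \<le> 2*k" unfolding k_def by (simp add: algebra_simps)
    then show ?thesis unfolding blk_def W_def by auto
  qed
  have cblk: "card (blk u) = a" for u unfolding blk_def by simp
  have grX: "gr b s f \<subseteq> {0..<k}" for f unfolding gr_def kbs by auto
  have AW: "A i \<inter> W = blk (snd (g i))" if "i \<in> {1..n}" for i
    using blkW[OF gi(2)[OF that]] grX[of "fst (g i)"] unfolding A_def Av_def W_def by auto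
  have cAW: "card (A i \<inter> W) = a" if "i \<in> {1..n}" for i using AW[OF that] cblk by simp
  have AX: "A i \<inter> {0..<k} = gr b s (fst (g i))" if "i \<in> {1..n}" for i
    using blkW[OF gi(2)[OF that]] grX[of "fst (g i)"] unfolding A_def Av_def W_def by auto
  have cAX: "card (A i \<inter> {0..<k}) = s" if "i \<in> {1..n}" for i
    using AX[OF that] gr_card[OF bpos, of "fst (g i)" s] gi(1)[OF that] unfolding F_def by simp
  have AC: "A i \<subseteq> C" if "i \<in> {1..n}" for i
    using blkW[OF gi(2)[OF that]] grX[of "fst (g i)"] unfolding A_def Av_def W_def C_def by auto
  have WC: "W \<subseteq> C" unfolding W_def C_def by auto
  have cardW: "card W = k" unfolding W_def by simp
  have cardC: "card C = 2*k" unfolding C_def by simp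
  have inst: "is_instance C n A k"
    unfolding is_instance_def using AC npos kpos cardC unfolding C_def by auto
  have comm: "is_committee C k W" unfolding is_committee_def using WC cardW by simp
  have exh: "exhaustive k W" unfolding exhaustive_def using cardW by simp
  have swW: "sw n A W = n*a" unfolding sw_def using cAW by simp
  have swX: "sw n A {0..<k} = n*s" unfolding sw_def using cAX by simp
  have optge: "opt_sw C n A k \<ge> n*s"
  proof -
    have fin: "finite {sw n A W' | W'. W' \<subseteq> C \<and> card W' = k}"
    proof -
      have "{sw n A W' | W'. W' \<subseteq> C \<and> card W' = k} \<subseteq> (\<lambda>W'. sw n A W') ` Pow C" by auto
      moreover have "finite ((\<lambda>W'. sw n A W') ` Pow C)" unfolding C_def by simp
      ultimately show ?thesis by (rule finite_subset)
    qed
    have "sw n A {0..<k} \<in> {sw n A W' | W'. W' \<subseteq> C \<and> card W' = k}" unfolding C_def by auto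
    from Max_ge[OF fin this] show ?thesis unfolding opt_sw_def swX .
  qed
  have optpos: "opt_sw C n A k > 0" using optge npos spos
    by (metis less_le_trans nat_0_less_mult_iff)
  have ratio: "util_ratio C n A k W \<le> real a / real s"
  proof -
    have "util_ratio C n A k W = real (n*a) / real (opt_sw C n A k)" unfolding util_ratio_def swW by simp
    also have "\<dots> \<le> real (n*a) / real (n*s)"
    proof (rule divide_left_mono)
      show "real (n*s) \<le> real (opt_sw C n A k)" using optge by linarith
      show "0 < real (opt_sw C n A k) * real (n*s)" using optpos npos spos by simp
    qed simp
    also have "\<dots> = real a / real s" using npos by simp
    finally show ?thesis .
  qed
  have afford: "affordable C n A k W"
  proof -
    define B where "B = real (b^s)"
    have Bpos: "B > 0" unfolding B_def using bpos by simp
    define p where "p = (\<lambda>i c. if c \<in> W \<and> c \<in> A i then 1 / B else 0)"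
    have s1: "(\<Sum>c\<in>C. p i c) \<le> real k / real n" if i: "i \<in> {1..n}" for i
    proof -
      have "(\<Sum>c\<in>C. p i c) = (\<Sum>c\<in>{c\<in>C. c \<in> W \<and> c \<in> A i}. 1 / B)"
        unfolding p_def by (rule sum.inter_filter[symmetric]) (simp add: C_def)
      also have "{c\<in>C. c \<in> W \<and> c \<in> A i} = A i \<inter> W" using WC by auto
      also have "(\<Sum>c\<in>A i \<inter> W. 1 / B) = real a / B" using cAW[OF i] by simp
      also have "real a / B = real k / real n"
        unfolding B_def n_def cardV k_def using mpos by (simp add: field_simps)
      finally show ?thesis by simp
    qed
    have s2: "(\<Sum>i\<in>{1..n}. p i c) = 1" if c: "c \<in> W" for c
    proof -
      have "(\<Sum>i\<in>{1..n}. p i c) = (\<Sum>i\<in>{i\<in>{1..n}. c \<in> Av (g i)}. 1 / B)"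
        unfolding p_def A_def using c by (subst sum.inter_filter) auto
      also have "\<dots> = real (card {i\<in>{1..n}. c \<in> Av (g i)}) / B" by simp
      also have "card {i\<in>{1..n}. c \<in> Av (g i)} = card {v\<in>V. c \<in> Av v}"
        by (rule bij_card_filter[OF g])
      also have "{v\<in>V. c \<in> Av v} = F \<times> {(c-k) div a}"
      proof -
        have ck: "k \<le> c" "c - k < a*m" using c unfolding W_def k_def by auto
        have um: "(c-k) div a < m" using ck(2) a1
          by (metis div_less_iff_less_mult mult.commute not_one_le_zero zero_less_iff_neq_zero)
        have "c \<notin> gr b s f" for f using grX[of f] ck by auto
        then have e1: "c \<in> Av v \<longleftrightarrow> c \<in> blk (snd v)" for v unfolding Av_def by auto
        have e2: "c \<in> blk u \<longleftrightarrow> u = (c-k) div a" for u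
        proof -
          have "a > 0" using a1 by simp
          from blk_iff[where a=a and k=k and u=u and c=c, OF this] show ?thesis unfolding blk_def using ck(1) by simp
        qed
        have "c \<in> Av v \<longleftrightarrow> snd v = (c-k) div a" for v using e1 e2 by simp
        then show ?thesis unfolding V_def using um by auto
      qed
      also have "card (F \<times> {(c-k) div a}) = card F" by (simp add: card_cartesian_product)
      finally show ?thesis using cardF Bpos unfolding B_def by simp
    qed
    have s3: "(\<Sum>i\<in>{1..n}. p i c) = 0" if c: "c \<in> C - W" for c
      using c unfolding p_def by simp
    show ?thesis unfolding affordable_def
      by (rule exI[of _ p]) (use s1 s2 s3 Bpos in \<open>auto simp: p_def\<close>)
  qed
  have ejr: "EJR n A k W"
    unfolding EJR_def
  proof (intro ballI allI impI)
    fix l N'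
    assume l: "l \<in> {1..k}" and N': "N' \<subseteq> {1..n}"
      and sz: "real l * real n / real k \<le> real (card N')"
      and com: "l \<le> card (\<Inter>i\<in>N'. A i)"
    have hN: "l * n \<le> card N' * k"
    proof -
      have "real l * real n \<le> real (card N') * real k" using sz kpos by (simp add: field_simps)
      then show ?thesis by (metis of_nat_le_iff of_nat_mult)
    qed
    have finN: "finite N'" using N' finite_subset by blast
    have Nne: "N' \<noteq> {}" using hN l npos by auto
    have injg: "inj_on g N'" using g N' unfolding bij_betw_def by (auto intro: inj_on_subset)
    have cg: "card (g ` N') = card N'" using injg by (simp add: card_image)
    show "\<exists>i\<in>N'. l \<le> card (A i \<inter> W)"
    proof (cases "l \<le> a")
      case True
      obtain i where i: "i \<in> N'" using Nne by auto
      then have "i \<in> {1..n}" using N' by auto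
      then have "card (A i \<inter> W) = a" by (rule cAW)
      then show ?thesis using i True by auto
    next
      case False
      define I where "I = (\<Inter>i\<in>N'. A i)"
      have IA: "I \<subseteq> A i" if "i \<in> N'" for i using that unfolding I_def by auto
      have False
      proof (cases "\<exists>x\<in>I. k \<le> x")
        case True
        then obtain x where x: "x \<in> I" "k \<le> x" by auto
        have "g ` N' \<subseteq> F \<times> {(x-k) div a}"
        proof
          fix v assume "v \<in> g ` N'"
          then obtain i where i: "i \<in> N'" "v = g i" by auto
          have i1: "i \<in> {1..n}" using i N' by auto
          have "x \<in> A i" using IA[OF i(1)] x by auto
          moreover have "x \<notin> gr b s (fst (g i))" using grX[of "fst (g i)"] x by auto
          ultimately have "x \<in> blk (snd (g i))" unfolding A_def Av_def by auto
          moreover have "a > 0" using a1 by simp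
          ultimately have "snd (g i) = (x-k) div a" unfolding blk_def using blk_iff[where a=a and k=k and u="snd (g i)" and c=x] by simp
          then show "v \<in> F \<times> {(x-k) div a}" using gi(1)[OF i1] i(2) by (simp add: mem_Times_iff)
        qed
        then have "card (g ` N') \<le> card (F \<times> {(x-k) div a})" using finF by (intro card_mono) auto
        also have "card (F \<times> {(x-k) div a}) = b^s" using cardF by (simp add: card_cartesian_product)
        finally have "card N' \<le> b^s" using cg by simp
        then have "card N' * k \<le> b^s * (a*m)" unfolding k_def by simp
        also have "\<dots> < l * (b^s * m)" using False bpos mpos by simp
        also have "\<dots> = l * n" unfolding n_def cardV by simp
        finally show False using hN by simp
      next
        case False
        then have IX: "I \<subseteq> {0..<b*s}" unfolding kbs by auto
        define Q where "Q = {f\<in>{0..<s} \<rightarrow>\<^sub>E {0..<b}. I \<subseteq> gr b s f}"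
        have sub: "g ` N' \<subseteq> Q \<times> {..<m}"
        proof
          fix v assume "v \<in> g ` N'"
          then obtain i where i: "i \<in> N'" "v = g i" by auto
          have i1: "i \<in> {1..n}" using i N' by auto
          have "I \<subseteq> A i \<inter> {0..<k}" using IA[OF i(1)] IX kbs by auto
          then have "I \<subseteq> gr b s (fst (g i))" using AX[OF i1] by simp
          then show "v \<in> Q \<times> {..<m}" using gi[OF i1] i(2) unfolding Q_def F_def by (simp add: mem_Times_iff)
        qed
        have Qne: "Q \<noteq> {}" using sub Nne by auto
        from count_fun[OF bpos IX Qne[unfolded Q_def]]
        have cI: "card I \<le> s" and cQ: "card Q \<le> b^(s - card I)" unfolding Q_def by auto
        have finQ: "finite Q" unfolding Q_def using finF F_def by auto
        have "card (g ` N') \<le> card (Q \<times> {..<m})" using sub finQ by (intro card_mono) auto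
        then have "card N' \<le> card (Q \<times> {..<m})" using cg by simp
        also have "\<dots> = card Q * m" by (simp add: card_cartesian_product)
        finally have cN: "card N' \<le> b^(s - card I) * m" using cQ
          by (meson le_trans mult_le_mono1)
        have lI: "a + 1 \<le> card I" using com \<open>\<not> l \<le> a\<close> unfolding I_def by simp
        have "b^(s - card I) * k \<le> b^(s - card I) * b^(card I)"
          unfolding kpow using lI bpos by (intro mult_le_mono2 power_increasing) auto
        also have "\<dots> = b^s" using cI by (simp add: power_add[symmetric])
        finally have bk: "b^(s - card I) * k \<le> b^s" .
        have "card N' * k \<le> b^(s - card I) * m * k" using cN by simp
        also have "\<dots> \<le> b^s * m" using bk by (simp add: mult.commute mult.left_commute)
        also have "\<dots> < l * (b^s * m)" using \<open>\<not> l \<le> a\<close> a1 bpos mpos by simp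
        also have "\<dots> = l * n" unfolding n_def cardV by simp
        finally show False using hN by simp
      qed
      then show ?thesis by blast
    qed
  qed
  have "k = (a*t)^(a+1)" unfolding kpow b_def by simp
  moreover have "s = (a*t)^a" unfolding s_def b_def by simp
  ultimately show ?thesis using inst comm exh afford ejr optpos ratio by blast
qed


lemma powr_bound:
  fixes b a :: nat and c :: real
  assumes b1: "b \<ge> 1" and ca: "1 \<le> c * (real a + 1)"
  shows "real (b^(a+1)) powr (1 - c) \<le> real (b^a)"
proof -
  have bp: "real b > 0" using b1 by simp
  have "real (b^(a+1)) powr (1 - c) = (real b powr real (a+1)) powr (1 - c)"
  proof -
    have "real b powr real (a+1) = real b ^ (a+1)" using bp by (rule powr_realpow)
    then show ?thesis by simp
  qed
  also have "\<dots> = real b powr (real (a+1) * (1 - c))" by (simp add: powr_powr)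
  also have "\<dots> \<le> real b powr real a"
    using b1 ca by (intro powr_mono) (auto simp: algebra_simps)
  also have "\<dots> = real (b^a)" using bp by (simp add: powr_realpow)
  finally show ?thesis .
qed

theorem theorem2:
  fixes c :: real
  assumes "0 < c" and "c < 1"
  shows "\<exists>K :: real. K > 0 \<and>
    infinite {k :: nat. k > 0 \<and>
      (\<exists>C n A W. is_instance C n A k \<and> is_committee C k W \<and> exhaustive k W \<and>
         affordable C n A k W \<and> EJR n A k W \<and>
         opt_sw C n A k > 0 \<and>
         util_ratio C n A k W \<le> K / real k powr (1 - c))}"
proof -
  define a where "a = nat \<lceil>1/c\<rceil>"
  have ge: "real a \<ge> 1/c" unfolding a_def by linarith
  have "1/c > 1" using assms by simp
  then have a1: "a \<ge> 1" using ge by linarith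
  have ca: "1 \<le> c * (real a + 1)"
  proof -
    have "1 = c * (1/c)" using assms by simp
    also have "\<dots> \<le> c * real a" using ge assms by (intro mult_left_mono) auto
    also have "\<dots> \<le> c * (real a + 1)" using assms by simp
    finally show ?thesis .
  qed
  define h where "h = (\<lambda>t::nat. (a*(t+1))^(a+1))"
  have injh: "inj h"
  proof
    fix x y assume "h x = h y"
    then have "(a*(x+1))^(a+1) = (a*(y+1))^(a+1)" unfolding h_def .
    then have "a*(x+1) = a*(y+1)" by (rule power_eq_imp_eq_base) auto
    then show "x = y" using a1 by simp
  qed
  have sub: "range h \<subseteq> {k :: nat. k > 0 \<and>
      (\<exists>C n A W. is_instance C n A k \<and> is_committee C k W \<and> exhaustive k W \<and>
         affordable C n A k W \<and> EJR n A k W \<and>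
         opt_sw C n A k > 0 \<and>
         util_ratio C n A k W \<le> real a / real k powr (1 - c))}"
  proof
    fix k assume "k \<in> range h"
    then obtain t where kt: "k = h t" by auto
    define b where "b = a*(t+1)"
    have b1: "b \<ge> 1" using a1 unfolding b_def by simp
    have kb: "k = b^(a+1)" unfolding kt h_def b_def by simp
    have kpos: "k > 0" using b1 kb by simp
    obtain C n A W where H: "is_instance C n A k" "is_committee C k W" "exhaustive k W"
      "affordable C n A k W" "EJR n A k W" "opt_sw C n A k > 0"
      "util_ratio C n A k W \<le> real a / real (b^a)"
      using construction[OF a1, of "t+1"] unfolding kb b_def by auto
    have pb: "real k powr (1 - c) \<le> real (b^a)" using powr_bound[OF b1 ca] kb by simp
    have "real a / real (b^a) \<le> real a / real k powr (1 - c)"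
    proof (rule divide_left_mono)
      show "real k powr (1 - c) \<le> real (b^a)" by (rule pb)
      have "real k powr (1 - c) > 0" using kpos by simp
      moreover have "real (b^a) > 0" using b1 by simp
      ultimately show "0 < real (b^a) * real k powr (1 - c)" by (rule mult_pos_pos[rotated])
    qed simp
    then show "k \<in> {k :: nat. k > 0 \<and>
      (\<exists>C n A W. is_instance C n A k \<and> is_committee C k W \<and> exhaustive k W \<and>
         affordable C n A k W \<and> EJR n A k W \<and>
         opt_sw C n A k > 0 \<and>
         util_ratio C n A k W \<le> real a / real k powr (1 - c))}"
      using H kpos by fastforce
  qed
  have "infinite (range h)" using injh by (rule range_inj_infinite)
  then have "infinite {k :: nat. k > 0 \<and>
      (\<exists>C n A W. is_instance C n A k \<and> is_committee C k W \<and> exhaustive k W \<and>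
         affordable C n A k W \<and> EJR n A k W \<and>
         opt_sw C n A k > 0 \<and>
         util_ratio C n A k W \<le> real a / real k powr (1 - c))}"
    using sub infinite_super by blast
  moreover have "real a > 0" using a1 by simp
  ultimately show ?thesis by blast
qed

end
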